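(* Let $\mathbf t:\mathcal D\to\mathcal T$ be any refinement system and $Q\sqsubset B$. Then there are natural isomorphisms of presheaves $Q^{-}\cong(Q^{+})^{\perp}$ (on $B^{-}$) and $Q^{+}\cong{}^{\perp}(Q^{-})$ (on $B^{+}$), where the duals are taken with respect to $B$.
   Context: A refinement system is a functor $\mathbf{t}:\mathcal{D}\to\mathcal{T}$; composition is diagrammatic ($c;d$ = first $c$ then $d$). Write $P\sqsubset A$ if $\mathbf t(P)=A$; a derivation of $P\Rightarrow_cQ$ ($c:A\to B$) is a morphism $\alpha:P\to Q$ of $\mathcal D$ with $\mathbf t(\alpha)=c$. Relative slice: $B^{+}$ has objects $(P,c)$ with $P\sqsubset X$, $c:X\to B$, and morphisms $(P_1,c_1)\to(P_2,c_2)$ the derivations of $P_1\Rightarrow_eP_2$ with $c_1=e;c_2$. For $Q\sqsubset B$, $Q^{+}:(B^{+})^{op}\to\mathbf{Set}$ sends $(P,c)$ to the set of derivations of $P\Rightarrow_cQ$, acting on morphisms by precomposition. Relative coslice: the category with objects $(d,R)$, $d:B\to Y$, $R\sqsubset Y$, and morphisms $(d_1,R_1)\to(d_2,R_2)$ the derivations of $R_1\Rightarrow_eR_2$ with $d_1;e=d_2$; $B^{-}$ is its opposite. $Q^{-}:(B^{-})^{op}\to\mathbf{Set}$ sends $(d,R)$ to the set of derivations of $Q\Rightarrow_dR$, acting by postcomposition. The category of judgments $\mathrm{Jdg}(\mathbf t)$ has objects triples $(P,c,R)$ with $P\sqsubset X$, $c:X\to Y$, $R\sqsubset Y$; morphisms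 $(P_1,c_1,R_1)\to(P_2,c_2,R_2)$ are pairs of derivations $\beta$ of $P_1\Rightarrow_eP_2$ and $\gamma$ of $R_2\Rightarrow_{e'}R_1$ with $c_1=e;c_2;e'$. The presheaf of derivations $\mathrm{Der}:\mathrm{Jdg}(\mathbf t)^{op}\to\mathbf{Set}$ sends $(P,c,R)$ to the set of derivations of $P\Rightarrow_cR$, and $(\beta,\gamma)$ to $\alpha\mapsto\beta;\alpha;\gamma$. The bracket functor $\langle-\mid-\rangle_B:B^{+}\times B^{-}\to\mathrm{Jdg}(\mathbf t)$ sends $((P,c),(d,R))\mapsto(P,c;d,R)$ and a pair of morphisms (given by derivations $\beta$, $\gamma$) to $(\beta,\gamma)$. Duals with respect to $B$: for a presheaf $\phi$ on $B^{+}$, $\phi^{\perp}$ is the presheaf on $B^{-}$ with $\phi^{\perp}(y)=$ the set of natural transformations $\phi\Rightarrow\mathrm{Der}(\langle-\mid y\rangle_B)$ of presheaves on $B^{+}$; for a presheaf $\psi$ on $B^{-}$, ${}^{\perp}\psi$ is the presheaf on $B^{+}$ with ${}^{\perp}\psi(x)=$ the set of natural transformations $\psi\Rightarrow\mathrm{Der}(\langle x\mid-\rangle_B)$ of presheaves on $B^{-}$ (functorial in $y$, resp. $x$, via the bracket). *)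

theory Defs
  imports Main
begin

record ('o,'a) cat =
  Ob :: "'o set"
  Ar :: "'a set"
  Dom :: "'a \<Rightarrow> 'o"
  Cod :: "'a \<Rightarrow> 'o"
  Id :: "'o \<Rightarrow> 'a"
  Comp :: "'a \<Rightarrow> 'a \<Rightarrow> 'a"   (* Comp C f g = f ; g : first f then g *)

definition is_category :: "('o,'a) cat \<Rightarrow> bool" where
  "is_category C \<longleftrightarrow>
     (\<forall>f\<in>Ar C. Dom C f \<in> Ob C \<and> Cod C f \<in> Ob C) \<and>
     (\<forall>a\<in>Ob C. Id C a \<in> Ar C \<and> Dom C (Id C a) = a \<and> Cod C (Id C a) = a) \<and>
     (\<forall>f\<in>Ar C. \<forall>g\<in>Ar C. Cod C f = Dom C g \<longrightarrow>
        Comp C f g \<in> Ar C \<and> Dom C (Comp C f g) = Dom C f \<and> Cod C (Comp C f g) = Cod C g) \<and>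
     (\<forall>f\<in>Ar C. Comp C (Id C (Dom C f)) f = f \<and> Comp C f (Id C (Cod C f)) = f) \<and>
     (\<forall>f\<in>Ar C. \<forall>g\<in>Ar C. \<forall>h\<in>Ar C. Cod C f = Dom C g \<longrightarrow> Cod C g = Dom C h \<longrightarrow>
        Comp C (Comp C f g) h = Comp C f (Comp C g h))"

definition is_functor :: "('o,'a) cat \<Rightarrow> ('x,'c) cat \<Rightarrow> ('o \<Rightarrow> 'x) \<Rightarrow> ('a \<Rightarrow> 'c) \<Rightarrow> bool" where
  "is_functor C E Fo Fa \<longleftrightarrow>
     (\<forall>a\<in>Ob C. Fo a \<in> Ob E) \<and>
     (\<forall>f\<in>Ar C. Fa f \<in> Ar E \<and> Dom E (Fa f) = Fo (Dom C f) \<and> Cod E (Fa f) = Fo (Cod C f)) \<and>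
     (\<forall>a\<in>Ob C. Fa (Id C a) = Id E (Fo a)) \<and>
     (\<forall>f\<in>Ar C. \<forall>g\<in>Ar C. Cod C f = Dom C g \<longrightarrow> Fa (Comp C f g) = Comp E (Fa f) (Fa g))"

text \<open>A category is presented by its object set and hom-sets \<open>hom a b\<close>.
  A presheaf \<open>(F, Fm)\<close> on it has value sets \<open>F a\<close> and, for \<open>f \<in> hom a b\<close>,
  the action \<open>Fm f : F b \<rightarrow> F a\<close>.  The set of natural transformations is taken
  extensionally (values \<open>undefined\<close> off the domain).\<close>

definition nat_trans ::
  "'ob set \<Rightarrow> ('ob \<Rightarrow> 'ob \<Rightarrow> 'm set) \<Rightarrow> ('ob \<Rightarrow> 'v set) \<Rightarrow> ('m \<Rightarrow> 'v \<Rightarrow> 'v)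
     \<Rightarrow> ('ob \<Rightarrow> 'w set) \<Rightarrow> ('m \<Rightarrow> 'w \<Rightarrow> 'w) \<Rightarrow> ('ob \<Rightarrow> 'v \<Rightarrow> 'w) set" where
  "nat_trans obs hom F Fm G Gm =
     {\<eta>. (\<forall>a\<in>obs. \<forall>v\<in>F a. \<eta> a v \<in> G a) \<and>
          (\<forall>a\<in>obs. \<forall>b\<in>obs. \<forall>f\<in>hom a b. \<forall>v\<in>F b. \<eta> a (Fm f v) = Gm f (\<eta> b v)) \<and>
          (\<forall>a v. (a \<notin> obs \<or> v \<notin> F a) \<longrightarrow> \<eta> a v = undefined)}"

definition nat_iso ::
  "'ob set \<Rightarrow> ('ob \<Rightarrow> 'ob \<Rightarrow> 'm set) \<Rightarrow> ('ob \<Rightarrow> 'v set) \<Rightarrow> ('m \<Rightarrow> 'v \<Rightarrow> 'v)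
     \<Rightarrow> ('ob \<Rightarrow> 'w set) \<Rightarrow> ('m \<Rightarrow> 'w \<Rightarrow> 'w) \<Rightarrow> bool" where
  "nat_iso obs hom F Fm G Gm \<longleftrightarrow>
     (\<exists>\<theta>. (\<forall>a\<in>obs. bij_betw (\<theta> a) (F a) (G a)) \<and>
          (\<forall>a\<in>obs. \<forall>b\<in>obs. \<forall>f\<in>hom a b. \<forall>v\<in>F b. \<theta> a (Fm f v) = Gm f (\<theta> b v)))"

text \<open>This is also the presheaf Der on judgments \<open>(P,c,R)\<close>.\<close>
definition Der :: "('o,'a) cat \<Rightarrow> ('a \<Rightarrow> 'c) \<Rightarrow> 'o \<Rightarrow> 'c \<Rightarrow> 'o \<Rightarrow> 'a set" where
  "Der D ta P c R = {\<alpha>\<in>Ar D. Dom D \<alpha> = P \<and> Cod D \<alpha> = R \<and> ta \<alpha> = c}"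

definition Der_act :: "('o,'a) cat \<Rightarrow> 'a \<Rightarrow> 'a \<Rightarrow> 'a \<Rightarrow> 'a" where
  "Der_act D \<beta> \<gamma> \<alpha> = Comp D (Comp D \<beta> \<alpha>) \<gamma>"

definition plus_obs :: "('o,'a) cat \<Rightarrow> ('x,'c) cat \<Rightarrow> ('o \<Rightarrow> 'x) \<Rightarrow> 'x \<Rightarrow> ('o \<times> 'c) set" where
  "plus_obs D T to B = {(P,c). P \<in> Ob D \<and> c \<in> Ar T \<and> Dom T c = to P \<and> Cod T c = B}"

definition plus_hom :: "('o,'a) cat \<Rightarrow> ('x,'c) cat \<Rightarrow> ('a \<Rightarrow> 'c) \<Rightarrow> ('o \<times> 'c) \<Rightarrow> ('o \<times> 'c) \<Rightarrow> 'a set" where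
  "plus_hom D T ta x1 x2 =
     {\<beta>\<in>Ar D. Dom D \<beta> = fst x1 \<and> Cod D \<beta> = fst x2 \<and> snd x1 = Comp T (ta \<beta>) (snd x2)}"

text \<open>Relative coslice: objects \<open>(d,R)\<close>; morphisms \<open>(d1,R1) \<rightarrow> (d2,R2)\<close> are derivations
  \<open>\<gamma>\<close> of \<open>R1 \<Rightarrow>_e R2\<close> with \<open>d1;e = d2\<close>.  \<open>B\<^sup>-\<close> is its opposite.\<close>
definition minus_obs :: "('o,'a) cat \<Rightarrow> ('x,'c) cat \<Rightarrow> ('o \<Rightarrow> 'x) \<Rightarrow> 'x \<Rightarrow> ('c \<times> 'o) set" where
  "minus_obs D T to B = {(d,R). d \<in> Ar T \<and> R \<in> Ob D \<and> Dom T d = B \<and> Cod T d = to R}"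

definition coslice_hom :: "('o,'a) cat \<Rightarrow> ('x,'c) cat \<Rightarrow> ('a \<Rightarrow> 'c) \<Rightarrow> ('c \<times> 'o) \<Rightarrow> ('c \<times> 'o) \<Rightarrow> 'a set" where
  "coslice_hom D T ta y1 y2 =
     {\<gamma>\<in>Ar D. Dom D \<gamma> = snd y1 \<and> Cod D \<gamma> = snd y2 \<and> Comp T (fst y1) (ta \<gamma>) = fst y2}"

definition minus_hom :: "('o,'a) cat \<Rightarrow> ('x,'c) cat \<Rightarrow> ('a \<Rightarrow> 'c) \<Rightarrow> ('c \<times> 'o) \<Rightarrow> ('c \<times> 'o) \<Rightarrow> 'a set" where
  "minus_hom D T ta y1 y2 = coslice_hom D T ta y2 y1"

definition Qplus :: "('o,'a) cat \<Rightarrow> ('a \<Rightarrow> 'c) \<Rightarrow> 'o \<Rightarrow> ('o \<times> 'c) \<Rightarrow> 'a set" where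
  "Qplus D ta Q x = Der D ta (fst x) (snd x) Q"

definition Qplus_act :: "('o,'a) cat \<Rightarrow> 'a \<Rightarrow> 'a \<Rightarrow> 'a" where
  "Qplus_act D \<beta> \<alpha> = Comp D \<beta> \<alpha>"

definition Qminus :: "('o,'a) cat \<Rightarrow> ('a \<Rightarrow> 'c) \<Rightarrow> 'o \<Rightarrow> ('c \<times> 'o) \<Rightarrow> 'a set" where
  "Qminus D ta Q y = Der D ta Q (fst y) (snd y)"

definition Qminus_act :: "('o,'a) cat \<Rightarrow> 'a \<Rightarrow> 'a \<Rightarrow> 'a" where
  "Qminus_act D \<gamma> \<alpha> = Comp D \<alpha> \<gamma>"

text \<open>Bracket: \<open>\<langle>(P,c) | (d,R)\<rangle> = (P, c;d, R)\<close>; on morphisms \<open>(\<beta>,\<gamma>) \<mapsto> (\<beta>,\<gamma>)\<close>.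
  So \<open>Der \<langle>- | y\<rangle>\<close> is a presheaf on \<open>B\<^sup>+\<close> with action \<open>\<beta> \<mapsto> Der_act (\<beta>, id_R)\<close>, and
  \<open>Der \<langle>x | -\<rangle>\<close> a presheaf on \<open>B\<^sup>-\<close> with action \<open>\<gamma> \<mapsto> Der_act (id_P, \<gamma>)\<close>.\<close>

definition Der_bra_right :: "('o,'a) cat \<Rightarrow> ('x,'c) cat \<Rightarrow> ('a \<Rightarrow> 'c) \<Rightarrow> ('c \<times> 'o) \<Rightarrow> ('o \<times> 'c) \<Rightarrow> 'a set" where
  "Der_bra_right D T ta y x = Der D ta (fst x) (Comp T (snd x) (fst y)) (snd y)"

definition Der_bra_left :: "('o,'a) cat \<Rightarrow> ('x,'c) cat \<Rightarrow> ('a \<Rightarrow> 'c) \<Rightarrow> ('o \<times> 'c) \<Rightarrow> ('c \<times> 'o) \<Rightarrow> 'a set" where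
  "Der_bra_left D T ta x y = Der D ta (fst x) (Comp T (snd x) (fst y)) (snd y)"

definition perp_right ::
  "('o,'a) cat \<Rightarrow> ('x,'c) cat \<Rightarrow> ('o \<Rightarrow> 'x) \<Rightarrow> ('a \<Rightarrow> 'c) \<Rightarrow> 'x
     \<Rightarrow> (('o \<times> 'c) \<Rightarrow> 'v set) \<Rightarrow> ('a \<Rightarrow> 'v \<Rightarrow> 'v) \<Rightarrow> ('c \<times> 'o) \<Rightarrow> (('o \<times> 'c) \<Rightarrow> 'v \<Rightarrow> 'a) set" where
  "perp_right D T to ta B F Fm y =
     nat_trans (plus_obs D T to B) (plus_hom D T ta) F Fm
       (Der_bra_right D T ta y) (\<lambda>\<beta>. Der_act D \<beta> (Id D (snd y)))"

definition perp_right_act ::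
  "('o,'a) cat \<Rightarrow> ('x,'c) cat \<Rightarrow> ('o \<Rightarrow> 'x) \<Rightarrow> 'x \<Rightarrow> (('o \<times> 'c) \<Rightarrow> 'v set)
     \<Rightarrow> 'a \<Rightarrow> (('o \<times> 'c) \<Rightarrow> 'v \<Rightarrow> 'a) \<Rightarrow> (('o \<times> 'c) \<Rightarrow> 'v \<Rightarrow> 'a)" where
  "perp_right_act D T to B F \<gamma> \<eta> =
     (\<lambda>x v. if x \<in> plus_obs D T to B \<and> v \<in> F x then Der_act D (Id D (fst x)) \<gamma> (\<eta> x v) else undefined)"

definition perp_left ::
  "('o,'a) cat \<Rightarrow> ('x,'c) cat \<Rightarrow> ('o \<Rightarrow> 'x) \<Rightarrow> ('a \<Rightarrow> 'c) \<Rightarrow> 'x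
     \<Rightarrow> (('c \<times> 'o) \<Rightarrow> 'w set) \<Rightarrow> ('a \<Rightarrow> 'w \<Rightarrow> 'w) \<Rightarrow> ('o \<times> 'c) \<Rightarrow> (('c \<times> 'o) \<Rightarrow> 'w \<Rightarrow> 'a) set" where
  "perp_left D T to ta B G Gm x =
     nat_trans (minus_obs D T to B) (minus_hom D T ta) G Gm
       (Der_bra_left D T ta x) (\<lambda>\<gamma>. Der_act D (Id D (fst x)) \<gamma>)"

definition perp_left_act ::
  "('o,'a) cat \<Rightarrow> ('x,'c) cat \<Rightarrow> ('o \<Rightarrow> 'x) \<Rightarrow> 'x \<Rightarrow> (('c \<times> 'o) \<Rightarrow> 'w set)
     \<Rightarrow> 'a \<Rightarrow> (('c \<times> 'o) \<Rightarrow> 'w \<Rightarrow> 'a) \<Rightarrow> (('c \<times> 'o) \<Rightarrow> 'w \<Rightarrow> 'a)" where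
  "perp_left_act D T to B G \<beta> \<zeta> =
     (\<lambda>y v. if y \<in> minus_obs D T to B \<and> v \<in> G y then Der_act D \<beta> (Id D (snd y)) (\<zeta> y v) else undefined)"

end

theory Submission
  imports Defs
begin

lemma my_bij_betwI:
  assumes "\<forall>x\<in>A. f x \<in> B" "\<forall>y\<in>B. g y \<in> A" "\<And>x. x \<in> A \<Longrightarrow> g (f x) = x" "\<And>y. y \<in> B \<Longrightarrow> f (g y) = y"
  shows "bij_betw f A B"
  unfolding bij_betw_def inj_on_def using assms by (auto intro!: image_eqI) (metis)

lemma catD:
  assumes "is_category C"
  shows "\<And>f. f \<in> Ar C \<Longrightarrow> Dom C f \<in> Ob C \<and> Cod C f \<in> Ob C"
    and "\<And>a. a \<in> Ob C \<Longrightarrow> Id C a \<in> Ar C \<and> Dom C (Id C a) = a \<and> Cod C (Id C a) = a"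
    and "\<And>f g. f \<in> Ar C \<Longrightarrow> g \<in> Ar C \<Longrightarrow> Cod C f = Dom C g \<Longrightarrow>
        Comp C f g \<in> Ar C \<and> Dom C (Comp C f g) = Dom C f \<and> Cod C (Comp C f g) = Cod C g"
    and "\<And>f. f \<in> Ar C \<Longrightarrow> Comp C (Id C (Dom C f)) f = f"
    and "\<And>f. f \<in> Ar C \<Longrightarrow> Comp C f (Id C (Cod C f)) = f"
    and "\<And>f g h. f \<in> Ar C \<Longrightarrow> g \<in> Ar C \<Longrightarrow> h \<in> Ar C \<Longrightarrow> Cod C f = Dom C g \<Longrightarrow> Cod C g = Dom C h \<Longrightarrow>
        Comp C (Comp C f g) h = Comp C f (Comp C g h)"
  using assms unfolding is_category_def by blast+

lemma funD:
  assumes "is_functor C E Fo Fa"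
  shows "\<And>f. f \<in> Ar C \<Longrightarrow> Fa f \<in> Ar E \<and> Dom E (Fa f) = Fo (Dom C f) \<and> Cod E (Fa f) = Fo (Cod C f)"
    and "\<And>a. a \<in> Ob C \<Longrightarrow> Fa (Id C a) = Id E (Fo a)"
    and "\<And>f g. f \<in> Ar C \<Longrightarrow> g \<in> Ar C \<Longrightarrow> Cod C f = Dom C g \<Longrightarrow> Fa (Comp C f g) = Comp E (Fa f) (Fa g)"
  using assms unfolding is_functor_def by blast+

theorem theorem4p9:
  fixes D :: "('o,'a) cat" and T :: "('x,'c) cat"
    and to :: "'o \<Rightarrow> 'x" and ta :: "'a \<Rightarrow> 'c"
    and Q :: 'o and B :: 'x
  assumes "is_category D" and "is_category T" and "is_functor D T to ta"
    and "Q \<in> Ob D" and "to Q = B"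
  shows "nat_iso (minus_obs D T to B) (minus_hom D T ta)
           (Qminus D ta Q) (Qminus_act D)
           (perp_right D T to ta B (Qplus D ta Q) (Qplus_act D))
           (perp_right_act D T to B (Qplus D ta Q))
       \<and> nat_iso (plus_obs D T to B) (plus_hom D T ta)
           (Qplus D ta Q) (Qplus_act D)
           (perp_left D T to ta B (Qminus D ta Q) (Qminus_act D))
           (perp_left_act D T to B (Qminus D ta Q))"
proof -
  note D = catD[OF assms(1)] and T = catD[OF assms(2)] and F = funD[OF assms(3)]
  have BT: "B \<in> Ob T" using F(1) D(2)[OF assms(4)] T(1) assms(5) by metis
  have idQ: "Id D Q \<in> Ar D" "Dom D (Id D Q) = Q" "Cod D (Id D Q) = Q" "ta (Id D Q) = Id T B"
    using D(2)[OF assms(4)] F(2)[OF assms(4)] assms(5) by auto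
  have idB: "Id T B \<in> Ar T" "Dom T (Id T B) = B" "Cod T (Id T B) = B" using T(2)[OF BT] by auto
  have x0: "(Q, Id T B) \<in> plus_obs D T to B" using idB assms(4,5) by (auto simp: plus_obs_def)
  have y0: "(Id T B, Q) \<in> minus_obs D T to B" using idB assms(4,5) by (auto simp: minus_obs_def)
  have idQplus: "Id D Q \<in> Qplus D ta Q (Q, Id T B)" using idQ by (auto simp: Qplus_def Der_def)
  have idQminus: "Id D Q \<in> Qminus D ta Q (Id T B, Q)" using idQ by (auto simp: Qminus_def Der_def)
  have P1: "nat_iso (minus_obs D T to B) (minus_hom D T ta)
           (Qminus D ta Q) (Qminus_act D)
           (perp_right D T to ta B (Qplus D ta Q) (Qplus_act D))
           (perp_right_act D T to B (Qplus D ta Q))"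
    unfolding nat_iso_def
  proof (intro exI[of _ "\<lambda>y \<alpha>. \<lambda>x v. if x \<in> plus_obs D T to B \<and> v \<in> Qplus D ta Q x then Comp D v \<alpha> else undefined"] conjI ballI)
    fix y assume y: "y \<in> minus_obs D T to B"
    obtain d R where yd: "y = (d, R)" by (cases y)
    have dR: "d \<in> Ar T" "R \<in> Ob D" "Dom T d = B" "Cod T d = to R" using y yd by (auto simp: minus_obs_def)
    show "bij_betw (\<lambda>\<alpha>. \<lambda>x v. if x \<in> plus_obs D T to B \<and> v \<in> Qplus D ta Q x then Comp D v \<alpha> else undefined)
      (Qminus D ta Q y) (perp_right D T to ta B (Qplus D ta Q) (Qplus_act D) y)"
    proof (rule my_bij_betwI[where g="\<lambda>\<eta>. \<eta> (Q, Id T B) (Id D Q)"])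
      show "\<forall>\<alpha>\<in>Qminus D ta Q y. (\<lambda>x v. if x \<in> plus_obs D T to B \<and> v \<in> Qplus D ta Q x then Comp D v \<alpha> else undefined)
        \<in> perp_right D T to ta B (Qplus D ta Q) (Qplus_act D) y"
      proof
        fix \<alpha> assume a: "\<alpha> \<in> Qminus D ta Q y"
        then have a': "\<alpha> \<in> Ar D" "Dom D \<alpha> = Q" "Cod D \<alpha> = R" "ta \<alpha> = d"
          by (auto simp: Qminus_def Der_def yd)
        show "(\<lambda>x v. if x \<in> plus_obs D T to B \<and> v \<in> Qplus D ta Q x then Comp D v \<alpha> else undefined)
            \<in> perp_right D T to ta B (Qplus D ta Q) (Qplus_act D) y"
          unfolding perp_right_def nat_trans_def
        proof (intro CollectI conjI ballI allI impI)
          fix x v assume x: "x \<in> plus_obs D T to B" and v: "v \<in> Qplus D ta Q x"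
          obtain P c where xd: "x = (P, c)" by (cases x)
          have v': "v \<in> Ar D" "Dom D v = P" "Cod D v = Q" "ta v = c"
            using v by (auto simp: Qplus_def Der_def xd)
          show "(if x \<in> plus_obs D T to B \<and> v \<in> Qplus D ta Q x then Comp D v \<alpha> else undefined)
              \<in> Der_bra_right D T ta y x"
            using x v v' a' D(3)[of v \<alpha>] F(3)[of v \<alpha>]
            by (auto simp: Der_bra_right_def Der_def xd yd)
        next
          fix a b f v assume a: "a \<in> plus_obs D T to B" and b: "b \<in> plus_obs D T to B"
            and f: "f \<in> plus_hom D T ta a b" and v: "v \<in> Qplus D ta Q b"
          obtain P c where bd: "b = (P, c)" by (cases b)
          have v': "v \<in> Ar D" "Dom D v = P" "Cod D v = Q" "ta v = c"
            using v by (auto simp: Qplus_def Der_def bd)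
          have f': "f \<in> Ar D" "Cod D f = P" "Dom D f = fst a" "snd a = Comp T (ta f) c"
            using f by (auto simp: plus_hom_def bd)
          have fv: "Comp D f v \<in> Qplus D ta Q a"
            using f' v' D(3)[of f v] F(3)[of f v] by (auto simp: Qplus_def Der_def)
          have "Comp D (Comp D f v) \<alpha> = Comp D (Comp D f (Comp D v \<alpha>)) (Id D R)"
            using f' v' a' D(3)[of v \<alpha>] D(3)[of f "Comp D v \<alpha>"] D(5)[of "Comp D f (Comp D v \<alpha>)"] D(6)[of f v \<alpha>]
            by auto
          then show "(if a \<in> plus_obs D T to B \<and> Qplus_act D f v \<in> Qplus D ta Q a then Comp D (Qplus_act D f v) \<alpha> else undefined) =
             Der_act D f (Id D (snd y)) (if b \<in> plus_obs D T to B \<and> v \<in> Qplus D ta Q b then Comp D v \<alpha> else undefined)"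
            using a b v fv by (simp add: Qplus_act_def Der_act_def yd)
        next
          fix x v assume "x \<notin> plus_obs D T to B \<or> v \<notin> Qplus D ta Q x"
          then show "(if x \<in> plus_obs D T to B \<and> v \<in> Qplus D ta Q x then Comp D v \<alpha> else undefined) = undefined"
            by auto
        qed
      qed
    next
      show "\<forall>\<eta>\<in>perp_right D T to ta B (Qplus D ta Q) (Qplus_act D) y. \<eta> (Q, Id T B) (Id D Q) \<in> Qminus D ta Q y"
      proof
        fix \<eta> assume "\<eta> \<in> perp_right D T to ta B (Qplus D ta Q) (Qplus_act D) y"
        then have "\<eta> (Q, Id T B) (Id D Q) \<in> Der_bra_right D T ta y (Q, Id T B)"
          using x0 idQplus unfolding perp_right_def nat_trans_def by blast
        then show "\<eta> (Q, Id T B) (Id D Q) \<in> Qminus D ta Q y"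
          using T(4)[OF dR(1)] dR by (auto simp: Der_bra_right_def Qminus_def yd)
      qed
    next
      fix \<alpha> assume "\<alpha> \<in> Qminus D ta Q y"
      then have a': "\<alpha> \<in> Ar D" "Dom D \<alpha> = Q" by (auto simp: Qminus_def Der_def yd)
      show "(\<lambda>x v. if x \<in> plus_obs D T to B \<and> v \<in> Qplus D ta Q x then Comp D v \<alpha> else undefined) (Q, Id T B) (Id D Q) = \<alpha>"
        using x0 idQplus D(4)[OF a'(1)] a' by simp
    next
      fix \<eta> assume eta: "\<eta> \<in> perp_right D T to ta B (Qplus D ta Q) (Qplus_act D) y"
      have e0: "\<eta> (Q, Id T B) (Id D Q) \<in> Der_bra_right D T ta y (Q, Id T B)"
        using eta x0 idQplus unfolding perp_right_def nat_trans_def by blast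
      then have e0': "\<eta> (Q, Id T B) (Id D Q) \<in> Ar D" "Dom D (\<eta> (Q, Id T B) (Id D Q)) = Q"
          "Cod D (\<eta> (Q, Id T B) (Id D Q)) = R"
        by (auto simp: Der_bra_right_def Der_def yd)
      show "(\<lambda>x v. if x \<in> plus_obs D T to B \<and> v \<in> Qplus D ta Q x then Comp D v (\<eta> (Q, Id T B) (Id D Q)) else undefined) = \<eta>"
      proof (intro ext)
        fix x v
        show "(if x \<in> plus_obs D T to B \<and> v \<in> Qplus D ta Q x then Comp D v (\<eta> (Q, Id T B) (Id D Q)) else undefined) = \<eta> x v"
        proof (cases "x \<in> plus_obs D T to B \<and> v \<in> Qplus D ta Q x")
          case True
          obtain P c where xd: "x = (P, c)" by (cases x)
          have v': "v \<in> Ar D" "Dom D v = P" "Cod D v = Q" "ta v = c"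
            using True by (auto simp: Qplus_def Der_def xd)
          have vh: "v \<in> plus_hom D T ta x (Q, Id T B)"
            using v' T(5)[of "ta v"] F(1)[of v] assms(5) by (auto simp: plus_hom_def xd)
          have "\<eta> x (Qplus_act D v (Id D Q)) = Der_act D v (Id D (snd y)) (\<eta> (Q, Id T B) (Id D Q))"
            using eta True x0 vh idQplus unfolding perp_right_def nat_trans_def by blast
          moreover have "Qplus_act D v (Id D Q) = v" using D(5)[OF v'(1)] v' by (simp add: Qplus_act_def)
          moreover have "Der_act D v (Id D (snd y)) (\<eta> (Q, Id T B) (Id D Q)) = Comp D v (\<eta> (Q, Id T B) (Id D Q))"
            using e0' v' D(3)[of v "\<eta> (Q, Id T B) (Id D Q)"] D(5)[of "Comp D v (\<eta> (Q, Id T B) (Id D Q))"]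
            by (auto simp: Der_act_def yd)
          ultimately show ?thesis using True by simp
        next
          case False
          have "\<forall>a v. (a \<notin> plus_obs D T to B \<or> v \<notin> Qplus D ta Q a) \<longrightarrow> \<eta> a v = undefined"
            using eta unfolding perp_right_def nat_trans_def by blast
          then have "\<eta> x v = undefined" using False by blast
          then show ?thesis using False by (simp only: if_not_P[OF False] if_False)
        qed
      qed
    qed
  next
    fix a b f v assume a: "a \<in> minus_obs D T to B" and b: "b \<in> minus_obs D T to B"
      and f: "f \<in> minus_hom D T ta a b" and v: "v \<in> Qminus D ta Q b"
    obtain d R where bd: "b = (d, R)" by (cases b)
    have v': "v \<in> Ar D" "Dom D v = Q" "Cod D v = R" using v by (auto simp: Qminus_def Der_def bd)
    have f': "f \<in> Ar D" "Dom D f = R" using f by (auto simp: minus_hom_def coslice_hom_def bd)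
    show "(\<lambda>x w. if x \<in> plus_obs D T to B \<and> w \<in> Qplus D ta Q x then Comp D w (Qminus_act D f v) else undefined) =
      perp_right_act D T to B (Qplus D ta Q) f
        (\<lambda>x w. if x \<in> plus_obs D T to B \<and> w \<in> Qplus D ta Q x then Comp D w v else undefined)"
      unfolding perp_right_act_def
    proof (intro ext)
      fix x w
      show "(if x \<in> plus_obs D T to B \<and> w \<in> Qplus D ta Q x then Comp D w (Qminus_act D f v) else undefined) =
         (if x \<in> plus_obs D T to B \<and> w \<in> Qplus D ta Q x
          then Der_act D (Id D (fst x)) f (if x \<in> plus_obs D T to B \<and> w \<in> Qplus D ta Q x then Comp D w v else undefined)
          else undefined)"
      proof (cases "x \<in> plus_obs D T to B \<and> w \<in> Qplus D ta Q x")
        case True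
        obtain P c where xd: "x = (P, c)" by (cases x)
        have w': "w \<in> Ar D" "Dom D w = P" "Cod D w = Q"
          using True by (auto simp: Qplus_def Der_def xd)
        have "Comp D (Comp D (Id D P) (Comp D w v)) f = Comp D w (Comp D v f)"
          using w' v' f' D(3)[of w v] D(4)[of "Comp D w v"] D(6)[of w v f] by auto
        then show ?thesis using True by (simp add: Der_act_def Qminus_act_def xd)
      next
        case False
        then show ?thesis using False by (simp only: if_not_P[OF False] if_False)
      qed
    qed
  qed
  have P2: "nat_iso (plus_obs D T to B) (plus_hom D T ta)
           (Qplus D ta Q) (Qplus_act D)
           (perp_left D T to ta B (Qminus D ta Q) (Qminus_act D))
           (perp_left_act D T to B (Qminus D ta Q))"
    unfolding nat_iso_def
  proof (intro exI[of _ "\<lambda>x \<alpha>. \<lambda>y w. if y \<in> minus_obs D T to B \<and> w \<in> Qminus D ta Q y then Comp D \<alpha> w else undefined"] conjI ballI)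
    fix x assume x: "x \<in> plus_obs D T to B"
    obtain P c where xd: "x = (P, c)" by (cases x)
    have Pc: "P \<in> Ob D" "c \<in> Ar T" "Dom T c = to P" "Cod T c = B" using x xd by (auto simp: plus_obs_def)
    show "bij_betw (\<lambda>\<alpha>. \<lambda>y w. if y \<in> minus_obs D T to B \<and> w \<in> Qminus D ta Q y then Comp D \<alpha> w else undefined)
      (Qplus D ta Q x) (perp_left D T to ta B (Qminus D ta Q) (Qminus_act D) x)"
    proof (rule my_bij_betwI[where g="\<lambda>\<zeta>. \<zeta> (Id T B, Q) (Id D Q)"])
      show "\<forall>\<alpha>\<in>Qplus D ta Q x. (\<lambda>y w. if y \<in> minus_obs D T to B \<and> w \<in> Qminus D ta Q y then Comp D \<alpha> w else undefined)
        \<in> perp_left D T to ta B (Qminus D ta Q) (Qminus_act D) x"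
      proof
        fix \<alpha> assume a: "\<alpha> \<in> Qplus D ta Q x"
        then have a': "\<alpha> \<in> Ar D" "Dom D \<alpha> = P" "Cod D \<alpha> = Q" "ta \<alpha> = c"
          by (auto simp: Qplus_def Der_def xd)
        show "(\<lambda>y w. if y \<in> minus_obs D T to B \<and> w \<in> Qminus D ta Q y then Comp D \<alpha> w else undefined)
            \<in> perp_left D T to ta B (Qminus D ta Q) (Qminus_act D) x"
          unfolding perp_left_def nat_trans_def
        proof (intro CollectI conjI ballI allI impI)
          fix y w assume y: "y \<in> minus_obs D T to B" and w: "w \<in> Qminus D ta Q y"
          obtain d R where yd: "y = (d, R)" by (cases y)
          have w': "w \<in> Ar D" "Dom D w = Q" "Cod D w = R" "ta w = d"
            using w by (auto simp: Qminus_def Der_def yd)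
          show "(if y \<in> minus_obs D T to B \<and> w \<in> Qminus D ta Q y then Comp D \<alpha> w else undefined)
              \<in> Der_bra_left D T ta x y"
            using y w w' a' D(3)[of \<alpha> w] F(3)[of \<alpha> w]
            by (auto simp: Der_bra_left_def Der_def xd yd)
        next
          fix a b f v assume a: "a \<in> minus_obs D T to B" and b: "b \<in> minus_obs D T to B"
            and f: "f \<in> minus_hom D T ta a b" and v: "v \<in> Qminus D ta Q b"
          obtain d R where bd: "b = (d, R)" by (cases b)
          have v': "v \<in> Ar D" "Dom D v = Q" "Cod D v = R" "ta v = d"
            using v by (auto simp: Qminus_def Der_def bd)
          have f': "f \<in> Ar D" "Dom D f = R" "Cod D f = snd a" "Comp T d (ta f) = fst a"
            using f by (auto simp: minus_hom_def coslice_hom_def bd)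
          have vf: "Comp D v f \<in> Qminus D ta Q a"
            using f' v' D(3)[of v f] F(3)[of v f] by (auto simp: Qminus_def Der_def)
          have "Comp D \<alpha> (Comp D v f) = Comp D (Comp D (Id D P) (Comp D \<alpha> v)) f"
            using f' v' a' D(3)[of \<alpha> v] D(4)[of "Comp D \<alpha> v"] D(6)[of \<alpha> v f]
            by auto
          then show "(if a \<in> minus_obs D T to B \<and> Qminus_act D f v \<in> Qminus D ta Q a then Comp D \<alpha> (Qminus_act D f v) else undefined) =
             Der_act D (Id D (fst x)) f (if b \<in> minus_obs D T to B \<and> v \<in> Qminus D ta Q b then Comp D \<alpha> v else undefined)"
            using a b v vf by (simp add: Qminus_act_def Der_act_def xd)
        next
          fix y w assume "y \<notin> minus_obs D T to B \<or> w \<notin> Qminus D ta Q y"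
          then show "(if y \<in> minus_obs D T to B \<and> w \<in> Qminus D ta Q y then Comp D \<alpha> w else undefined) = undefined"
            by auto
        qed
      qed
    next
      show "\<forall>\<zeta>\<in>perp_left D T to ta B (Qminus D ta Q) (Qminus_act D) x. \<zeta> (Id T B, Q) (Id D Q) \<in> Qplus D ta Q x"
      proof
        fix \<zeta> assume "\<zeta> \<in> perp_left D T to ta B (Qminus D ta Q) (Qminus_act D) x"
        then have "\<zeta> (Id T B, Q) (Id D Q) \<in> Der_bra_left D T ta x (Id T B, Q)"
          using y0 idQminus unfolding perp_left_def nat_trans_def by blast
        then show "\<zeta> (Id T B, Q) (Id D Q) \<in> Qplus D ta Q x"
          using T(5)[OF Pc(2)] Pc by (auto simp: Der_bra_left_def Qplus_def xd)
      qed
    next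
      fix \<alpha> assume "\<alpha> \<in> Qplus D ta Q x"
      then have a': "\<alpha> \<in> Ar D" "Cod D \<alpha> = Q" by (auto simp: Qplus_def Der_def xd)
      show "(\<lambda>y w. if y \<in> minus_obs D T to B \<and> w \<in> Qminus D ta Q y then Comp D \<alpha> w else undefined) (Id T B, Q) (Id D Q) = \<alpha>"
        using y0 idQminus D(5)[OF a'(1)] a' by simp
    next
      fix \<zeta> assume eta: "\<zeta> \<in> perp_left D T to ta B (Qminus D ta Q) (Qminus_act D) x"
      have e0: "\<zeta> (Id T B, Q) (Id D Q) \<in> Der_bra_left D T ta x (Id T B, Q)"
        using eta y0 idQminus unfolding perp_left_def nat_trans_def by blast
      then have e0': "\<zeta> (Id T B, Q) (Id D Q) \<in> Ar D" "Dom D (\<zeta> (Id T B, Q) (Id D Q)) = P"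
          "Cod D (\<zeta> (Id T B, Q) (Id D Q)) = Q"
        by (auto simp: Der_bra_left_def Der_def xd)
      show "(\<lambda>y w. if y \<in> minus_obs D T to B \<and> w \<in> Qminus D ta Q y then Comp D (\<zeta> (Id T B, Q) (Id D Q)) w else undefined) = \<zeta>"
      proof (intro ext)
        fix y w
        show "(if y \<in> minus_obs D T to B \<and> w \<in> Qminus D ta Q y then Comp D (\<zeta> (Id T B, Q) (Id D Q)) w else undefined) = \<zeta> y w"
        proof (cases "y \<in> minus_obs D T to B \<and> w \<in> Qminus D ta Q y")
          case True
          obtain d R where yd: "y = (d, R)" by (cases y)
          have w': "w \<in> Ar D" "Dom D w = Q" "Cod D w = R" "ta w = d"
            using True by (auto simp: Qminus_def Der_def yd)
          have wh: "w \<in> minus_hom D T ta y (Id T B, Q)"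
            using w' T(4)[of "ta w"] F(1)[of w] assms(5) by (auto simp: minus_hom_def coslice_hom_def yd)
          have "\<zeta> y (Qminus_act D w (Id D Q)) = Der_act D (Id D (fst x)) w (\<zeta> (Id T B, Q) (Id D Q))"
            using eta True y0 wh idQminus unfolding perp_left_def nat_trans_def by blast
          moreover have "Qminus_act D w (Id D Q) = w" using D(4)[OF w'(1)] w' by (simp add: Qminus_act_def)
          moreover have "Der_act D (Id D (fst x)) w (\<zeta> (Id T B, Q) (Id D Q)) = Comp D (\<zeta> (Id T B, Q) (Id D Q)) w"
            using e0' D(4)[of "\<zeta> (Id T B, Q) (Id D Q)"]
            by (auto simp: Der_act_def xd)
          ultimately show ?thesis using True by simp
        next
          case False
          have "\<forall>a v. (a \<notin> minus_obs D T to B \<or> v \<notin> Qminus D ta Q a) \<longrightarrow> \<zeta> a v = undefined"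
            using eta unfolding perp_left_def nat_trans_def by blast
          then have "\<zeta> y w = undefined" using False by blast
          then show ?thesis using False by (simp only: if_not_P[OF False] if_False)
        qed
      qed
    qed
  next
    fix a b f v assume a: "a \<in> plus_obs D T to B" and b: "b \<in> plus_obs D T to B"
      and f: "f \<in> plus_hom D T ta a b" and v: "v \<in> Qplus D ta Q b"
    obtain P c where bd: "b = (P, c)" by (cases b)
    have v': "v \<in> Ar D" "Dom D v = P" "Cod D v = Q" using v by (auto simp: Qplus_def Der_def bd)
    have f': "f \<in> Ar D" "Cod D f = P" using f by (auto simp: plus_hom_def bd)
    show "(\<lambda>y w. if y \<in> minus_obs D T to B \<and> w \<in> Qminus D ta Q y then Comp D (Qplus_act D f v) w else undefined) =
      perp_left_act D T to B (Qminus D ta Q) f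
        (\<lambda>y w. if y \<in> minus_obs D T to B \<and> w \<in> Qminus D ta Q y then Comp D v w else undefined)"
      unfolding perp_left_act_def
    proof (intro ext)
      fix y w
      show "(if y \<in> minus_obs D T to B \<and> w \<in> Qminus D ta Q y then Comp D (Qplus_act D f v) w else undefined) =
         (if y \<in> minus_obs D T to B \<and> w \<in> Qminus D ta Q y
          then Der_act D f (Id D (snd y)) (if y \<in> minus_obs D T to B \<and> w \<in> Qminus D ta Q y then Comp D v w else undefined)
          else undefined)"
      proof (cases "y \<in> minus_obs D T to B \<and> w \<in> Qminus D ta Q y")
        case True
        obtain d R where yd: "y = (d, R)" by (cases y)
        have w': "w \<in> Ar D" "Dom D w = Q" "Cod D w = R"
          using True by (auto simp: Qminus_def Der_def yd)
        have "Comp D (Comp D f (Comp D v w)) (Id D R) = Comp D (Comp D f v) w"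
          using w' v' f' D(3)[of v w] D(3)[of f "Comp D v w"] D(5)[of "Comp D f (Comp D v w)"] D(6)[of f v w] by auto
        then show ?thesis using True by (simp add: Der_act_def Qplus_act_def yd)
      next
        case False
        then show ?thesis using False by (simp only: if_not_P[OF False] if_False)
      qed
    qed
  qed
show ?thesis using P1 P2 by blast
qed

end
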